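(* Let $n$ training samples carry labels in $\{1,\dots,K\}$ with indicator matrix $F\in\mathbb{R}^{K\times n}$. Let the basis $G_1,\dots,G_r$ ($r\le n$) be a subset of the training samples such that every class contains at least one basis vector, and let $F_{G_i}$ be the indicator vector of the class of $G_i$. Let $W\in\mathbb{R}^{r\times n}$ be an entrywise nonnegative similarity matrix with all column sums positive, $S=\operatorname{diag}(\mathbf{1}^TW)$, $\tilde W=WS^{-1}$, and assume $\tilde W$ has full row rank. Let $X^*=F\tilde W^T(\tilde W\tilde W^T)^{-1}$. If $W$ satisfies the ideal bipartite-graph condition, i.e. $W_{ij}=0$ whenever $F_{G_i}\neq F_j$, then the rows of $F$ lie in the row space of $\tilde W$ and zero fitting error is achieved: $F=X^*\tilde W$.
   Context: The columns of $F$ are standard basis vectors of $\mathbb{R}^K$: $F_j=e_k$ iff sample $j$ is in class $k$. $W_{ij}$ is the similarity between basis vector $G_i$ and training sample $j$. $X^*$ is the minimizer of $\|F-X\tilde W\|_F^2$ (normalized RBF network). *)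

theory Defs
  imports "HOL-Analysis.Analysis"
begin

definition indicator_matrix :: "('n \<Rightarrow> 'k) \<Rightarrow> real^'n^'k" where
  "indicator_matrix lab = (\<chi> k j. if lab j = k then 1 else 0)"

definition diag_mat :: "real^'n \<Rightarrow> real^'n^'n" where
  "diag_mat v = (\<chi> i j. if i = j then v $ i else 0)"

definition col_sum_diag :: "real^'n^'r \<Rightarrow> real^'n^'n" where
  "col_sum_diag W = diag_mat (\<chi> j. \<Sum>i\<in>UNIV. W $ i $ j)"

definition normalized_W :: "real^'n^'r \<Rightarrow> real^'n^'r" where
  "normalized_W W = W ** matrix_inv (col_sum_diag W)"

definition X_star :: "real^'n^'k \<Rightarrow> real^'n^'r \<Rightarrow> real^'r^'k" where
  "X_star F Wt = F ** transpose Wt ** matrix_inv (Wt ** transpose Wt)"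

end

theory Submission
  imports Defs
begin

lemma matrix_inv_right:
  fixes A :: "real^'n^'n"
  assumes "invertible A"
  shows "A ** matrix_inv A = mat 1" "matrix_inv A ** A = mat 1"
proof -
  from assms obtain B where "A ** B = mat 1 \<and> B ** A = mat 1" unfolding invertible_def by blast
  hence "A ** matrix_inv A = mat 1 \<and> matrix_inv A ** A = mat 1"
    unfolding matrix_inv_def by (rule someI)
  thus "A ** matrix_inv A = mat 1" "matrix_inv A ** A = mat 1" by auto
qed

lemma diag_inv:
  fixes v :: "real^'n"
  assumes "\<forall>j. v $ j \<noteq> 0"
  shows "matrix_inv (diag_mat v) = diag_mat (\<chi> j. 1 / v $ j)"
proof -
  let ?D = "diag_mat v" and ?E = "diag_mat (\<chi> j. 1 / v $ j)"
  have prod: "\<And>a b :: real^'n. diag_mat a ** diag_mat b = diag_mat (\<chi> j. a $ j * b $ j)"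
  proof -
    fix a b :: "real^'n"
    have "(\<Sum>k\<in>UNIV. (if i = k then a $ i else 0) * (if k = j then b $ k else 0)) =
          (if i = j then a $ j * b $ j else 0)" for i j :: 'n
    proof (cases "i = j")
      case True thus ?thesis by (simp add: if_distrib sum.delta cong: if_cong)
    next
      case False thus ?thesis by (simp, intro sum.neutral) auto
    qed
    thus "diag_mat a ** diag_mat b = diag_mat (\<chi> j. a $ j * b $ j)"
      unfolding diag_mat_def matrix_matrix_mult_def by (simp add: vec_eq_iff)
  qed
  have "?D ** ?E = mat 1" "?E ** ?D = mat 1"
    unfolding prod using assms by (auto simp: diag_mat_def mat_def vec_eq_iff)
  hence inv: "invertible ?D" unfolding invertible_def by blast
  have "?E = ?E ** (?D ** matrix_inv ?D)" using matrix_inv_right(1)[OF inv] by simp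
  also have "\<dots> = (?E ** ?D) ** matrix_inv ?D" by (simp add: matrix_mul_assoc)
  also have "\<dots> = matrix_inv ?D" using \<open>?E ** ?D = mat 1\<close> by simp
  finally show ?thesis by simp
qed

theorem theorem2:
  fixes lab :: "'n::finite \<Rightarrow> 'k::finite"
    and g :: "'r::finite \<Rightarrow> 'n"
    and W :: "real^'n^'r"
  assumes basis_subset: "inj g"
    and every_class: "\<forall>k. \<exists>i. lab (g i) = k"
    and W_nonneg: "\<forall>i j. W $ i $ j \<ge> 0"
    and W_colsum_pos: "\<forall>j. (\<Sum>i\<in>UNIV. W $ i $ j) > 0"
    and full_row_rank: "rank (normalized_W W) = CARD('r)"
    and ideal: "\<forall>i j. column (g i) (indicator_matrix lab) \<noteq> column j (indicator_matrix lab)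
                       \<longrightarrow> W $ i $ j = 0"
  shows "(\<forall>k. row k (indicator_matrix lab) \<in> span (rows (normalized_W W))) \<and>
         indicator_matrix lab = X_star (indicator_matrix lab) (normalized_W W) ** normalized_W W"
proof -
  define s where "s = (\<chi> j. \<Sum>i\<in>UNIV. W $ i $ j)"
  define Wt where "Wt = normalized_W W"
  define F where "F = indicator_matrix lab"
  define A :: "real^'r^'k" where "A = (\<chi> k i. if lab (g i) = k then 1 else 0)"
  have spos: "\<forall>j. s $ j \<noteq> 0" using W_colsum_pos by (simp add: s_def) (metis less_irrefl)
  have Wt_ent: "Wt $ i $ j = W $ i $ j / s $ j" for i j
    unfolding Wt_def normalized_W_def col_sum_diag_def s_def[symmetric] diag_inv[OF spos]
    by (simp add: matrix_matrix_mult_def diag_mat_def if_distrib sum.delta cong: if_cong)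
  have Wz: "lab (g i) \<noteq> lab j \<Longrightarrow> W $ i $ j = 0" for i j
  proof -
    assume h: "lab (g i) \<noteq> lab j"
    have "column (g i) F \<noteq> column j F"
    proof
      assume "column (g i) F = column j F"
      hence "column (g i) F $ lab j = column j F $ lab j" by simp
      thus False using h by (simp add: column_def F_def indicator_matrix_def)
    qed
    thus ?thesis using ideal F_def by blast
  qed
  have pt: "(if lab (g i) = k then 1 else 0) * W $ i $ j = (if lab j = k then W $ i $ j else 0)" for i j k
    using Wz[of i j] by auto
  have FA: "F = A ** Wt"
  proof -
    have "F $ k $ j = (A ** Wt) $ k $ j" for k j
    proof -
      have "(A ** Wt) $ k $ j = (\<Sum>i\<in>UNIV. (if lab (g i) = k then 1 else 0) * W $ i $ j) / s $ j"
        by (simp add: matrix_matrix_mult_def A_def Wt_ent sum_divide_distrib)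
      also have "\<dots> = (if lab j = k then s $ j else 0) / s $ j"
        by (simp add: pt s_def)
      also have "\<dots> = F $ k $ j" using spos by (simp add: F_def indicator_matrix_def)
      finally show ?thesis by simp
    qed
    thus ?thesis by (simp add: vec_eq_iff)
  qed
  have part1: "row k F \<in> span (rows Wt)" for k
  proof -
    have "row k F = (\<Sum>i\<in>UNIV. A $ k $ i *s row i Wt)"
      by (simp add: FA row_def vec_eq_iff matrix_matrix_mult_def sum_component mult.commute)
    also have "\<dots> \<in> span (rows Wt)"
    proof (intro span_sum)
      fix i
      have "row i Wt \<in> span (rows Wt)" by (rule span_base) (auto simp: rows_def)
      thus "A $ k $ i *s row i Wt \<in> span (rows Wt)"
        by (simp add: scalar_mult_eq_scaleR span_scale)
    qed
    finally show ?thesis .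
  qed
  let ?M = "Wt ** transpose Wt"
  have inj: "transpose Wt *v x = 0 \<Longrightarrow> x = 0" for x
  proof -
    assume "transpose Wt *v x = 0"
    moreover have "inj ((*v) (transpose Wt))"
      using full_row_rank rank_transpose[of Wt] full_rank_injective Wt_def by metis
    ultimately show "x = 0" by (metis injD matrix_vector_mult_0_right)
  qed
  have ker: "?M *v x = 0 \<Longrightarrow> x = 0" for x
  proof -
    assume h: "?M *v x = 0"
    have "(transpose Wt *v x) \<bullet> (transpose Wt *v x) = (x v* Wt) \<bullet> (transpose Wt *v x)"
      by (simp add: vector_transpose_matrix transpose_matrix_vector)
    also have "\<dots> = x \<bullet> (Wt *v (transpose Wt *v x))" by (simp add: dot_lmul_matrix)
    also have "\<dots> = 0" using h by (metis matrix_vector_mul_assoc inner_zero_right)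
    finally show "x = 0" using inj by simp
  qed
  have invM: "invertible ?M"
    using ker matrix_left_invertible_ker invertible_left_inverse by blast
  have "X_star F Wt ** Wt = A ** (?M ** matrix_inv ?M) ** Wt"
    unfolding X_star_def FA by (simp add: matrix_mul_assoc)
  also have "\<dots> = F" using matrix_inv_right(1)[OF invM] FA by simp
  finally show ?thesis using part1 unfolding F_def Wt_def by simp
qed

end
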